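(* Let $f:\mathbb{R}^n\times\mathbb{R}^m\to\mathbb{R}$ be twice continuously differentiable, $\mu$-strongly convex in $x$ and $\mu$-strongly concave in $y$ ($\mu>0$), with the largest singular value of $\nabla F(z)$ at most $L$ for all $z$ and $\|\nabla F(z)-\nabla F(z')\|\le L_2\|z-z'\|$, where $z=(x;y)$ and $F(z)=(\nabla_x f(x,y);-\nabla_y f(x,y))$. Let $m(z)=\frac12\|F(z)\|^2$, for a starting point $z^0$ let $D=\max\{\|z-z^0\|: m(z)\le m(z^0)\}$ and $L_m=L^2+LL_2D$. Let $\{z^k\}$ be generated by the CRN-SPP method (described in the context) with $\alpha=\frac{\mu^2}{2L_m}$. Then $\{m(z^k)\}$ converges linearly to $0$: $$m(z^{k+1})\le\Big(1-\frac{\mu^2}{6L_m}\Big)^2m(z^k).$$ As a result, it takes at most $\mathcal{O}\big((\kappa^2+\kappa\cdot\frac{L_2}{\mu})\ln(\frac1\epsilon)\big)$ iterations to find a point $\bar z$ with $m(\bar z)\le\epsilon$, where $\kappa=L/\mu$.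
   Context: CRN-SPP with parameters $\bar\gamma>0$, $\rho,\alpha\in(0,1)$: at iterate $z^k=(x^k;y^k)$ let $g^k=\nabla f(z^k)$, $H^k=\nabla^2 f(z^k)$ and for $\gamma>0$ define $f_k(x,y;\gamma)=f(z^k)+\langle g^k,z-z^k\rangle+\frac12(z-z^k)^\top H^k(z-z^k)+\frac{\gamma}{3}\|x-x^k\|^3-\frac{\gamma}{3}\|y-y^k\|^3$. Set $\gamma^k=\bar\gamma$, compute the saddle point $(\tilde x,\tilde y)$ of $\min_x\max_y f_k(x,y;\gamma^k)$, and let $u^k=\tilde x-x^k$, $v^k=\tilde y-y^k$; while $\gamma^k(\|u^k\|+\|v^k\|)>\mu$, replace $\gamma^k$ by $\rho\gamma^k$ and recompute. Set $d^k=(u^k;v^k)$, and $z^{k+1}=z^k+\alpha d^k$ if $m(z^k+\alpha d^k)<m(z^k+d^k)$, otherwise $z^{k+1}=z^k+d^k$. Norms: Euclidean for vectors, largest singular value for matrices. *)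

theory Defs
  imports "HOL-Analysis.Analysis"
begin

definition strongly_convex_on :: "'a::real_normed_vector set \<Rightarrow> real \<Rightarrow> ('a \<Rightarrow> real) \<Rightarrow> bool" where
  "strongly_convex_on S \<mu> h \<longleftrightarrow>
     (\<forall>x\<in>S. \<forall>y\<in>S. \<forall>t\<in>{0..1}.
        h ((1 - t) *\<^sub>R x + t *\<^sub>R y) \<le> (1 - t) * h x + t * h y - \<mu> / 2 * t * (1 - t) * (norm (x - y))\<^sup>2)"

definition Fop :: "(('a::real_normed_vector) \<times> ('b::real_normed_vector) \<Rightarrow> 'a \<times> 'b) \<Rightarrow> 'a \<times> 'b \<Rightarrow> 'a \<times> 'b" where
  "Fop g z = (fst (g z), - snd (g z))"

definition DFop :: "(('a::real_normed_vector) \<times> ('b::real_normed_vector) \<Rightarrow> ('a \<times> 'b) \<Rightarrow>\<^sub>L ('a \<times> 'b)) \<Rightarrow> 'a \<times> 'b \<Rightarrow> 'a \<times> 'b \<Rightarrow> 'a \<times> 'b" where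
  "DFop H z h = (fst (blinfun_apply (H z) h), - snd (blinfun_apply (H z) h))"

definition merit :: "(('a::real_normed_vector) \<times> ('b::real_normed_vector) \<Rightarrow> 'a \<times> 'b) \<Rightarrow> 'a \<times> 'b \<Rightarrow> real" where
  "merit g z = (1/2) * (norm (Fop g z))\<^sup>2"

definition crn_model ::
  "(('a::real_inner) \<times> ('b::real_inner) \<Rightarrow> real) \<Rightarrow> ('a \<times> 'b \<Rightarrow> 'a \<times> 'b) \<Rightarrow> ('a \<times> 'b \<Rightarrow> ('a \<times> 'b) \<Rightarrow>\<^sub>L ('a \<times> 'b))
     \<Rightarrow> 'a \<times> 'b \<Rightarrow> real \<Rightarrow> 'a \<times> 'b \<Rightarrow> real" where
  "crn_model f g H zk \<gamma> z =
     f zk + inner (g zk) (z - zk) + (1/2) * inner (z - zk) (blinfun_apply (H zk) (z - zk))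
     + \<gamma> / 3 * (norm (fst z - fst zk)) ^ 3 - \<gamma> / 3 * (norm (snd z - snd zk)) ^ 3"

definition is_saddle :: "('a \<times> 'b \<Rightarrow> real) \<Rightarrow> 'a \<times> 'b \<Rightarrow> bool" where
  "is_saddle \<phi> p \<longleftrightarrow>
     (\<forall>x y. \<phi> (fst p, y) \<le> \<phi> p \<and> \<phi> p \<le> \<phi> (x, snd p))"

definition crn_disp where
  "crn_disp f g H zk \<gamma> = (THE d. is_saddle (crn_model f g H zk \<gamma>) (zk + d))"

text \<open>Backtracking: gamma^k = gamma_bar * rho^j with j the number of reductions
  performed by the while loop, i.e. the least j with gamma (||u||+||v||) <= mu.\<close>
definition crn_gamma where
  "crn_gamma f g H \<mu> \<gamma>bar \<rho> zk =
     \<gamma>bar * \<rho> ^ (LEAST j. \<gamma>bar * \<rho> ^ j *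
        (norm (fst (crn_disp f g H zk (\<gamma>bar * \<rho> ^ j))) + norm (snd (crn_disp f g H zk (\<gamma>bar * \<rho> ^ j)))) \<le> \<mu>)"

definition crn_step where
  "crn_step f g H \<mu> \<gamma>bar \<rho> \<alpha> zk =
     (let d = crn_disp f g H zk (crn_gamma f g H \<mu> \<gamma>bar \<rho> zk)
      in if merit g (zk + \<alpha> *\<^sub>R d) < merit g (zk + d) then zk + \<alpha> *\<^sub>R d else zk + d)"

end

theory Submission
  imports Defs
begin

lemma deriv_lower:
  fixes p :: "real \<Rightarrow> real"
  assumes d: "(p has_real_derivative D) (at 0)"
    and b: "\<And>t. 0 < t \<Longrightarrow> t < 1 \<Longrightarrow> c \<le> (p t - p 0) / t"
  shows "c \<le> D"
proof -
  have "(p has_real_derivative D) (at 0 within {0<..})"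
    using d by (rule has_field_derivative_at_within)
  then have "((\<lambda>y. (p y - p 0) / (y - 0)) \<longlongrightarrow> D) (at_right 0)"
    by (simp add: has_field_derivative_iff)
  moreover have "eventually (\<lambda>y. c \<le> (p y - p 0) / (y - 0)) (at_right (0::real))"
    unfolding eventually_at_right_field
    by (rule exI[of _ 1]) (auto intro: b)
  ultimately show ?thesis
    by (rule tendsto_lowerbound) simp
qed

lemma cubic_real:
  fixes A B I :: real
  assumes "A \<ge> 0" "B \<ge> 0" "A * I \<le> A * (A * B)"
  shows "A * (I - A^2) \<le> (B ^ 3 - A ^ 3) / 3"
proof -
  have "0 \<le> (B - A)^2 * (B + 2 * A)" using assms by simp
  then have "3 * (A ^ 2 * B) - 2 * A ^ 3 \<le> B ^ 3"
    by (simp add: algebra_simps power2_eq_square power3_eq_cube)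
  then show ?thesis using assms(3)
    by (simp add: algebra_simps power2_eq_square power3_eq_cube)
qed

lemma cubic_ineq:
  fixes a b :: "'a::real_inner"
  shows "norm a * inner a (b - a) \<le> (norm b ^ 3 - norm a ^ 3) / 3"
proof -
  have "inner a b \<le> norm a * norm b" by (rule norm_cauchy_schwarz)
  then have "norm a * inner a b \<le> norm a * (norm a * norm b)"
    by (simp add: mult_left_mono)
  moreover have "inner a (b - a) = inner a b - (norm a)^2"
    by (simp add: inner_diff_right power2_norm_eq_inner)
  ultimately show ?thesis
    using cubic_real[of "norm a" "norm b" "inner a b"] by simp
qed

lemma zero_exists:
  fixes G :: "'a::euclidean_space \<Rightarrow> 'a"
  assumes cont: "continuous_on (cball a R) G" and R: "R > 0"
    and sph: "\<And>p. norm (p - a) = R \<Longrightarrow> inner (G p) (p - a) \<ge> 0"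
  shows "\<exists>p. G p = 0"
proof (rule ccontr)
  assume nz: "\<not> (\<exists>p. G p = 0)"
  define h where "h p = a - (R / norm (G p)) *\<^sub>R G p" for p
  have "continuous_on (cball a R) h"
    unfolding h_def using nz
    by (intro continuous_intros cont) auto
  moreover have "h \<in> cball a R \<rightarrow> cball a R"
    using nz R by (auto simp: h_def dist_norm)
  ultimately obtain p where p: "p \<in> cball a R" "h p = p"
    using brouwer[of "cball a R" h] R by auto
  have Gp: "G p \<noteq> 0" using nz by auto
  have pa: "p - a = - ((R / norm (G p)) *\<^sub>R G p)"
  proof -
    have "p = a - (R / norm (G p)) *\<^sub>R G p" using p(2) unfolding h_def by simp
    moreover have "\<And>X. p = a - X \<Longrightarrow> p - a = - X" by simp
    ultimately show ?thesis by blast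
  qed
  have "norm (p - a) = R" using pa R Gp by simp
  then have "inner (G p) (p - a) \<ge> 0" by (rule sph)
  moreover have "inner (G p) (p - a) = - R * norm (G p)"
    using Gp by (simp add: pa power2_norm_eq_inner[symmetric] power2_eq_square)
  moreover have "R * norm (G p) > 0" using R Gp by simp
  ultimately show False by linarith
qed

lemma deriv_upper:
  fixes p :: "real \<Rightarrow> real"
  assumes d: "(p has_real_derivative D) (at 0)"
    and b: "\<And>t. 0 < t \<Longrightarrow> t < 1 \<Longrightarrow> (p t - p 0) / t \<le> A - B * (1 - t)"
  shows "D \<le> A - B"
proof -
  have "(p has_real_derivative D) (at 0 within {0<..})"
    using d by (rule has_field_derivative_at_within)
  then have l1: "((\<lambda>y. (p y - p 0) / (y - 0)) \<longlongrightarrow> D) (at_right 0)"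
    by (simp add: has_field_derivative_iff)
  have l2: "((\<lambda>y. A - B * (1 - y)) \<longlongrightarrow> A - B * (1 - 0)) (at_right (0::real))"
    by (intro tendsto_intros)
  have ev: "eventually (\<lambda>y. (p y - p 0) / (y - 0) \<le> A - B * (1 - y)) (at_right (0::real))"
    unfolding eventually_at_right_field
    by (rule exI[of _ 1]) (auto intro: b)
  have "D \<le> A - B * (1 - 0)"
    by (rule tendsto_le[OF _ l2 l1 ev]) simp
  then show ?thesis by simp
qed

lemma line_deriv:
  fixes F :: "'a::real_normed_vector \<Rightarrow> 'b::real_inner"
  assumes dF: "\<And>w. (F has_derivative DF w) (at w)"
  shows "((\<lambda>t. inner e (F (z + t *\<^sub>R h))) has_real_derivative inner e (DF (z + t *\<^sub>R h) h)) (at t)"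
proof -
  have lin: "linear (DF (z + t *\<^sub>R h))" using dF has_derivative_linear by blast
  have d1: "((\<lambda>t. z + t *\<^sub>R h) has_derivative (\<lambda>s. s *\<^sub>R h)) (at t)"
    by (auto intro!: derivative_eq_intros)
  have d2: "((\<lambda>t. F (z + t *\<^sub>R h)) has_derivative (\<lambda>s. DF (z + t *\<^sub>R h) (s *\<^sub>R h))) (at t)"
    using has_derivative_compose[OF d1 dF] by simp
  have d3: "((\<lambda>t. inner e (F (z + t *\<^sub>R h))) has_derivative (\<lambda>s. inner e (DF (z + t *\<^sub>R h) (s *\<^sub>R h)))) (at t)"
    using has_derivative_inner_right[OF d2] by simp
  have eq: "(\<lambda>s. inner e (DF (z + t *\<^sub>R h) (s *\<^sub>R h))) = (*) (inner e (DF (z + t *\<^sub>R h) h))"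
    by (rule ext) (simp add: linear_scale[OF lin])
  show ?thesis using d3 unfolding eq has_field_derivative_def .
qed

lemma line_deriv_scalar:
  fixes h :: "'a::real_normed_vector \<Rightarrow> real"
  assumes dF: "(h has_derivative h') (at (z + t *\<^sub>R v))"
  shows "((\<lambda>t. h (z + t *\<^sub>R v)) has_real_derivative h' v) (at t)"
proof -
  have lin: "linear h'" using dF has_derivative_linear by blast
  have d1: "((\<lambda>t. z + t *\<^sub>R v) has_derivative (\<lambda>s. s *\<^sub>R v)) (at t)"
    by (auto intro!: derivative_eq_intros)
  have d2: "((\<lambda>t. h (z + t *\<^sub>R v)) has_derivative (\<lambda>s. h' (s *\<^sub>R v))) (at t)"
    using has_derivative_compose[OF d1 dF] by simp
  have eq: "(\<lambda>s. h' (s *\<^sub>R v)) = (*) (h' v)"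
    by (rule ext) (simp add: linear_scale[OF lin])
  show ?thesis using d2 unfolding eq has_field_derivative_def .
qed

lemma sc_grad:
  fixes h :: "'a::real_normed_vector \<Rightarrow> real"
  assumes sc: "strongly_convex_on UNIV \<mu> h" and d: "(h has_derivative h') (at x)"
  shows "h x + h' (x' - x) + \<mu> / 2 * (norm (x' - x))\<^sup>2 \<le> h x'"
proof -
  define p where "p t = h (x + t *\<^sub>R (x' - x))" for t
  have dp: "(p has_real_derivative h' (x' - x)) (at 0)"
    unfolding p_def using line_deriv_scalar[of h h' x 0 "x' - x"] d by simp
  have "h' (x' - x) \<le> (h x' - h x) - (\<mu> / 2 * (norm (x' - x))\<^sup>2)"
  proof (rule deriv_upper[OF dp])
    fix t :: real assume t: "0 < t" "t < 1"
    have "h ((1 - t) *\<^sub>R x + t *\<^sub>R x') \<le> (1 - t) * h x + t * h x' - \<mu> / 2 * t * (1 - t) * (norm (x - x'))\<^sup>2"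
      using sc t unfolding strongly_convex_on_def by auto
    moreover have "(1 - t) *\<^sub>R x + t *\<^sub>R x' = x + t *\<^sub>R (x' - x)"
      by (simp add: algebra_simps)
    moreover have "norm (x - x') = norm (x' - x)" by (rule norm_minus_commute)
    ultimately have "p t - p 0 \<le> t * ((h x' - h x) - \<mu> / 2 * (norm (x' - x))\<^sup>2 * (1 - t))"
      unfolding p_def by (simp add: algebra_simps)
    then show "(p t - p 0) / t \<le> (h x' - h x) - (\<mu> / 2 * (norm (x' - x))\<^sup>2) * (1 - t)"
      using t by (simp add: divide_le_eq mult.commute)
  qed
  then show ?thesis by simp
qed

lemma taylor_bound:
  fixes F :: "'a::real_normed_vector \<Rightarrow> 'b::real_inner"
  assumes dF: "\<And>w. (F has_derivative DF w) (at w)"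
    and lip: "\<And>w w'. onorm (\<lambda>h. DF w h - DF w' h) \<le> L2 * norm (w - w')"
    and L2: "L2 \<ge> 0"
  shows "norm (F (z + h) - F z - DF z h) \<le> L2 / 2 * (norm h)\<^sup>2"
proof -
  define R where "R = F (z + h) - F z - DF z h"
  have key: "inner e R \<le> norm e * (L2 / 2 * (norm h)\<^sup>2)" for e
  proof -
    define p where "p t = inner e (F (z + t *\<^sub>R h)) - t * inner e (DF z h) - norm e * (L2 / 2 * (norm h)\<^sup>2) * t^2" for t
    define p' where "p' t = inner e (DF (z + t *\<^sub>R h) h) - inner e (DF z h) - norm e * (L2 * (norm h)\<^sup>2) * t" for t
    have dp: "(p has_real_derivative p' t) (at t)" for t
      unfolding p_def p'_def
      by (rule derivative_eq_intros line_deriv[OF dF] refl | simp)+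
    obtain \<xi> where xi: "0 < \<xi>" "\<xi> < 1" "p 1 - p 0 = (1 - 0) * p' \<xi>"
      using MVT2[of 0 1 p p'] dp by auto
    have bl: "bounded_linear (\<lambda>k. DF (z + \<xi> *\<^sub>R h) k - DF z k)"
      using dF has_derivative_bounded_linear bounded_linear_sub by blast
    have "inner e (DF (z + \<xi> *\<^sub>R h) h) - inner e (DF z h) = inner e (DF (z + \<xi> *\<^sub>R h) h - DF z h)"
      by (simp add: inner_diff_right)
    also have "\<dots> \<le> norm e * norm (DF (z + \<xi> *\<^sub>R h) h - DF z h)"
      by (rule norm_cauchy_schwarz)
    also have "norm (DF (z + \<xi> *\<^sub>R h) h - DF z h) \<le> onorm (\<lambda>k. DF (z + \<xi> *\<^sub>R h) k - DF z k) * norm h"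
      using onorm[OF bl] by simp
    also have "\<dots> \<le> (L2 * norm (\<xi> *\<^sub>R h)) * norm h"
      using lip[of "z + \<xi> *\<^sub>R h" z] by (simp add: mult_right_mono)
    finally have "inner e (DF (z + \<xi> *\<^sub>R h) h) - inner e (DF z h) \<le> norm e * (L2 * norm (\<xi> *\<^sub>R h) * norm h)"
      by (simp add: mult_left_mono)
    then have "p' \<xi> \<le> 0"
      using xi unfolding p'_def by (simp add: power2_eq_square algebra_simps)
    then have "p 1 \<le> p 0" using xi by simp
    then show ?thesis unfolding p_def R_def
      by (simp add: inner_diff_right)
  qed
  have sq: "norm R * norm R \<le> norm R * (L2 / 2 * (norm h)\<^sup>2)"
    using key[of R] by (simp add: power2_norm_eq_inner[symmetric] power2_eq_square)
  show ?thesis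
  proof (cases "norm R = 0")
    case True then show ?thesis unfolding R_def[symmetric] using L2 by simp
  next
    case False
    then have "norm R > 0" by simp
    then show ?thesis using sq unfolding R_def[symmetric] by (simp add: mult_le_cancel_left_pos)
  qed
qed

lemma dbl_mvt:
  fixes f :: "'a::real_inner \<Rightarrow> real" and g :: "'a \<Rightarrow> 'a" and H :: "'a \<Rightarrow> 'a \<Rightarrow>\<^sub>L 'a"
  assumes grad: "\<And>w. (f has_derivative (\<lambda>h. inner (g w) h)) (at w)"
    and hess: "\<And>w. (g has_derivative blinfun_apply (H w)) (at w)"
    and t: "t > 0"
  shows "\<exists>\<xi>. norm (\<xi> - w) \<le> t * (norm p + norm q) \<and>
     f (w + t *\<^sub>R p + t *\<^sub>R q) - f (w + t *\<^sub>R p) - f (w + t *\<^sub>R q) + f w = t^2 * inner p (H \<xi> q)"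
proof -
  define \<phi> where "\<phi> s = f ((w + t *\<^sub>R q) + s *\<^sub>R p) - f (w + s *\<^sub>R p)" for s
  define \<phi>' where "\<phi>' s = inner (g ((w + t *\<^sub>R q) + s *\<^sub>R p)) p - inner (g (w + s *\<^sub>R p)) p" for s
  have d\<phi>: "(\<phi> has_real_derivative \<phi>' s) (at s)" for s
    unfolding \<phi>_def \<phi>'_def
    by (intro DERIV_diff line_deriv_scalar grad)
  obtain \<sigma> where s: "0 < \<sigma>" "\<sigma> < t" "\<phi> t - \<phi> 0 = (t - 0) * \<phi>' \<sigma>"
    using MVT2[of 0 t \<phi> \<phi>'] d\<phi> t by auto
  define \<psi> where "\<psi> \<tau> = inner p (g ((w + \<sigma> *\<^sub>R p) + \<tau> *\<^sub>R q))" for \<tau>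
  define \<psi>' where "\<psi>' \<tau> = inner p (H ((w + \<sigma> *\<^sub>R p) + \<tau> *\<^sub>R q) q)" for \<tau>
  have d\<psi>: "(\<psi> has_real_derivative \<psi>' \<tau>) (at \<tau>)" for \<tau>
    unfolding \<psi>_def \<psi>'_def by (rule line_deriv[OF hess])
  obtain \<tau> where ta: "0 < \<tau>" "\<tau> < t" "\<psi> t - \<psi> 0 = (t - 0) * \<psi>' \<tau>"
    using MVT2[of 0 t \<psi> \<psi>'] d\<psi> t by auto
  have "\<phi>' \<sigma> = \<psi> t - \<psi> 0"
    unfolding \<phi>'_def \<psi>_def by (simp add: inner_commute algebra_simps)
  have "\<phi> t - \<phi> 0 = f (w + t *\<^sub>R p + t *\<^sub>R q) - f (w + t *\<^sub>R p) - f (w + t *\<^sub>R q) + f w"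
    unfolding \<phi>_def by (simp add: algebra_simps)
  moreover have "norm ((w + \<sigma> *\<^sub>R p + \<tau> *\<^sub>R q) - w) \<le> t * (norm p + norm q)"
  proof -
    have "norm ((w + \<sigma> *\<^sub>R p + \<tau> *\<^sub>R q) - w) \<le> norm (\<sigma> *\<^sub>R p) + norm (\<tau> *\<^sub>R q)"
      using norm_triangle_ineq[of "\<sigma> *\<^sub>R p" "\<tau> *\<^sub>R q"] by (simp add: algebra_simps)
    also have "\<dots> = \<sigma> * norm p + \<tau> * norm q" using s ta by simp
    also have "\<dots> \<le> t * norm p + t * norm q"
      using s ta by (intro add_mono mult_right_mono) auto
    finally show ?thesis by (simp add: algebra_simps)
  qed
  ultimately show ?thesis
    using s ta \<open>\<phi>' \<sigma> = \<psi> t - \<psi> 0\<close> unfolding \<psi>'_def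
    by (intro exI[of _ "w + \<sigma> *\<^sub>R p + \<tau> *\<^sub>R q"]) (simp add: power2_eq_square)
qed

lemma hess_sym:
  fixes f :: "'a::real_inner \<Rightarrow> real" and g :: "'a \<Rightarrow> 'a" and H :: "'a \<Rightarrow> 'a \<Rightarrow>\<^sub>L 'a"
  assumes grad: "\<And>w. (f has_derivative (\<lambda>h. inner (g w) h)) (at w)"
    and hess: "\<And>w. (g has_derivative blinfun_apply (H w)) (at w)"
    and cont: "continuous_on UNIV H"
  shows "inner p (H w q) = inner q (H w p)"
proof -
  define x where "x = inner p (H w q) - inner q (H w p)"
  have "\<bar>x\<bar> \<le> e" if e: "e > 0" for e
  proof -
    define \<epsilon> where "\<epsilon> = e / (2 * norm p * norm q + 1)"
    have ep: "\<epsilon> > 0" using e unfolding \<epsilon>_def by (simp add: add_nonneg_pos)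
    have "isCont H w" using cont continuous_on_eq_continuous_at by blast
    then obtain \<delta> where d: "\<delta> > 0" "\<And>\<xi>. dist \<xi> w < \<delta> \<Longrightarrow> dist (H \<xi>) (H w) < \<epsilon>"
      using ep unfolding continuous_at_eps_delta by blast
    define t where "t = \<delta> / (2 * (norm p + norm q + 1))"
    have tp: "t > 0" using d unfolding t_def by (simp add: add_nonneg_pos)
    have tsmall: "t * (norm p + norm q) < \<delta>"
    proof -
      have "norm p + norm q < 2 * (norm p + norm q + 1)"
        using norm_ge_zero[of p] norm_ge_zero[of q] by (smt (verit))
      then have "t * (norm p + norm q) < t * (2 * (norm p + norm q + 1))"
        using tp by (intro mult_strict_left_mono) auto
      also have "\<dots> = \<delta>"
      proof -
        have "2 * norm p + 2 * norm q + 2 \<noteq> 0"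
          using norm_ge_zero[of p] norm_ge_zero[of q] by (smt (verit))
        then show ?thesis unfolding t_def by simp
      qed
      finally show ?thesis .
    qed
    obtain \<xi>1 where x1: "norm (\<xi>1 - w) \<le> t * (norm p + norm q)"
      "f (w + t *\<^sub>R p + t *\<^sub>R q) - f (w + t *\<^sub>R p) - f (w + t *\<^sub>R q) + f w = t^2 * inner p (H \<xi>1 q)"
      using dbl_mvt[OF grad hess tp, of w p q] by blast
    obtain \<xi>2 where x2: "norm (\<xi>2 - w) \<le> t * (norm q + norm p)"
      "f (w + t *\<^sub>R q + t *\<^sub>R p) - f (w + t *\<^sub>R q) - f (w + t *\<^sub>R p) + f w = t^2 * inner q (H \<xi>2 p)"
      using dbl_mvt[OF grad hess tp, of w q p] by blast
    have "w + t *\<^sub>R q + t *\<^sub>R p = w + t *\<^sub>R p + t *\<^sub>R q" by (simp add: algebra_simps)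
    then have "f (w + t *\<^sub>R q + t *\<^sub>R p) = f (w + t *\<^sub>R p + t *\<^sub>R q)" by (rule arg_cong[of _ _ f])
    then have "t^2 * inner p (H \<xi>1 q) = t^2 * inner q (H \<xi>2 p)" using x1(2) x2(2) by linarith
    then have eq: "inner p (H \<xi>1 q) = inner q (H \<xi>2 p)" using tp by simp
    have n1: "norm (H \<xi>1 - H w) < \<epsilon>" using d(2)[of \<xi>1] x1(1) tsmall by (simp add: dist_norm)
    have n2: "norm (H \<xi>2 - H w) < \<epsilon>" using d(2)[of \<xi>2] x2(1) tsmall by (simp add: dist_norm add.commute)
    have b1: "\<bar>inner p (H \<xi>1 q) - inner p (H w q)\<bar> \<le> \<epsilon> * (norm p * norm q)"
    proof -
      have "\<bar>inner p (H \<xi>1 q) - inner p (H w q)\<bar> = \<bar>inner p ((H \<xi>1 - H w) q)\<bar>"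
        by (simp add: blinfun.diff_left inner_diff_right)
      also have "\<dots> \<le> norm p * norm ((H \<xi>1 - H w) q)" by (rule Cauchy_Schwarz_ineq2)
      also have "\<dots> \<le> norm p * (norm (H \<xi>1 - H w) * norm q)"
        by (intro mult_left_mono norm_blinfun) auto
      also have "\<dots> \<le> norm p * (\<epsilon> * norm q)"
        using n1 by (intro mult_left_mono mult_right_mono) auto
      finally show ?thesis by (simp add: algebra_simps)
    qed
    have b2: "\<bar>inner q (H \<xi>2 p) - inner q (H w p)\<bar> \<le> \<epsilon> * (norm p * norm q)"
    proof -
      have "\<bar>inner q (H \<xi>2 p) - inner q (H w p)\<bar> = \<bar>inner q ((H \<xi>2 - H w) p)\<bar>"
        by (simp add: blinfun.diff_left inner_diff_right)
      also have "\<dots> \<le> norm q * norm ((H \<xi>2 - H w) p)" by (rule Cauchy_Schwarz_ineq2)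
      also have "\<dots> \<le> norm q * (norm (H \<xi>2 - H w) * norm p)"
        by (intro mult_left_mono norm_blinfun) auto
      also have "\<dots> \<le> norm q * (\<epsilon> * norm p)"
        using n2 by (intro mult_left_mono mult_right_mono) auto
      finally show ?thesis by (simp add: algebra_simps)
    qed
    have "\<bar>x\<bar> \<le> \<epsilon> * (2 * norm p * norm q)"
      using b1 b2 eq unfolding x_def by (simp add: abs_if split: if_splits) linarith?
    also have "\<dots> \<le> \<epsilon> * (2 * norm p * norm q + 1)" using ep by simp
    also have "\<dots> = e"
    proof -
      have "2 * norm p * norm q + 1 \<noteq> 0"
        using norm_ge_zero[of p] norm_ge_zero[of q] by (smt (verit) mult_nonneg_nonneg)
      then show ?thesis unfolding \<epsilon>_def by simp
    qed
    finally show ?thesis .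
  qed
  then have "x = 0"
    by (metis abs_ge_zero abs_not_less_zero field_lbound_gt_zero less_le_not_le zero_less_abs_iff)
  then show ?thesis unfolding x_def by simp
qed

lemma norm_sq_prod: "(norm z)\<^sup>2 = (norm (fst z))\<^sup>2 + (norm (snd z))\<^sup>2"
  unfolding norm_prod_def by simp

locale crn =
  fixes f :: "('a::euclidean_space) \<times> ('b::euclidean_space) \<Rightarrow> real"
    and g :: "'a \<times> 'b \<Rightarrow> 'a \<times> 'b"
    and H :: "'a \<times> 'b \<Rightarrow> ('a \<times> 'b) \<Rightarrow>\<^sub>L ('a \<times> 'b)"
    and \<mu> L L2 :: real
  assumes grad: "\<And>w. (f has_derivative (\<lambda>h. inner (g w) h)) (at w)"
    and hess: "\<And>w. (g has_derivative blinfun_apply (H w)) (at w)"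
    and hess_cont: "continuous_on UNIV H"
    and mu_pos: "\<mu> > 0"
    and sconvex: "\<And>y. strongly_convex_on UNIV \<mu> (\<lambda>x. f (x, y))"
    and sconcave: "\<And>x. strongly_convex_on UNIV \<mu> (\<lambda>y. - f (x, y))"
    and DF_bound: "\<And>w. onorm (DFop H w) \<le> L"
    and DF_lip: "\<And>w w'. onorm (\<lambda>h. DFop H w h - DFop H w' h) \<le> L2 * norm (w - w')"
begin

abbreviation "F \<equiv> Fop g"
abbreviation "DF \<equiv> DFop H"

lemma F_eq: "F z = (fst (g z), - snd (g z))" by (simp add: Fop_def)
lemma DF_eq: "DF w h = (fst (H w h), - snd (H w h))" by (simp add: DFop_def)

lemma F_deriv: "(F has_derivative DF w) (at w)"
proof -
  have "((\<lambda>z. (fst (g z), - snd (g z))) has_derivative (\<lambda>h. (fst (H w h), - snd (H w h)))) (at w)"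
    by (intro has_derivative_Pair has_derivative_fst has_derivative_snd has_derivative_minus hess)
  moreover have "F = (\<lambda>z. (fst (g z), - snd (g z)))" by (rule ext) (simp add: Fop_def)
  moreover have "DF w = (\<lambda>h. (fst (H w h), - snd (H w h)))" by (rule ext) (simp add: DFop_def)
  ultimately show ?thesis by simp
qed

lemma DF_bl: "bounded_linear (DF w)"
  using F_deriv has_derivative_bounded_linear by blast

lemma F_cont: "continuous_on S F"
  using F_deriv by (meson continuous_at_imp_continuous_on has_derivative_continuous)

lemma sc_x: "f (x, y) + inner (fst (g (x, y))) (x' - x) + \<mu> / 2 * (norm (x' - x))\<^sup>2 \<le> f (x', y)"
proof -
  have d1: "((\<lambda>x. (x, y)) has_derivative (\<lambda>v. (v, 0))) (at x)"
    by (intro has_derivative_Pair has_derivative_ident has_derivative_const)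
  have "((\<lambda>x. f (x, y)) has_derivative (\<lambda>v. inner (g (x, y)) (v, 0))) (at x)"
    using has_derivative_compose[OF d1 grad] by simp
  from sc_grad[OF sconvex this, of x'] show ?thesis by (simp add: inner_Pair_0)
qed

lemma sc_y: "- f (x, y) + inner (- snd (g (x, y))) (y' - y) + \<mu> / 2 * (norm (y' - y))\<^sup>2 \<le> - f (x, y')"
proof -
  have d1: "((\<lambda>y. (x, y)) has_derivative (\<lambda>v. (0, v))) (at y)"
    by (intro has_derivative_Pair has_derivative_ident has_derivative_const)
  have "((\<lambda>y. f (x, y)) has_derivative (\<lambda>v. inner (g (x, y)) (0, v))) (at y)"
    using has_derivative_compose[OF d1 grad] by simp
  then have "((\<lambda>y. - f (x, y)) has_derivative (\<lambda>v. - inner (g (x, y)) (0, v))) (at y)"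
    by (rule has_derivative_minus)
  from sc_grad[OF sconcave this, of y'] show ?thesis by (simp add: inner_Pair_0)
qed

lemma F_mono: "\<mu> * (norm (z - z'))\<^sup>2 \<le> inner (F z - F z') (z - z')"
proof -
  obtain x y where z: "z = (x, y)" by (cases z)
  obtain x' y' where z': "z' = (x', y')" by (cases z')
  have 1: "f (x, y) + inner (fst (g (x, y))) (x' - x) + \<mu> / 2 * (norm (x' - x))\<^sup>2 \<le> f (x', y)" by (rule sc_x)
  have 2: "- f (x, y) + inner (- snd (g (x, y))) (y' - y) + \<mu> / 2 * (norm (y' - y))\<^sup>2 \<le> - f (x, y')" by (rule sc_y)
  have 3: "f (x', y') + inner (fst (g (x', y'))) (x - x') + \<mu> / 2 * (norm (x - x'))\<^sup>2 \<le> f (x, y')" by (rule sc_x)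
  have 4: "- f (x', y') + inner (- snd (g (x', y'))) (y - y') + \<mu> / 2 * (norm (y - y'))\<^sup>2 \<le> - f (x', y)" by (rule sc_y)
  have n: "norm (x - x') = norm (x' - x)" "norm (y - y') = norm (y' - y)" by (simp_all add: norm_minus_commute)
  have "inner (F z - F z') (z - z') = inner (fst (g (x, y)) - fst (g (x', y'))) (x - x') - inner (snd (g (x, y)) - snd (g (x', y'))) (y - y')"
    unfolding z z' F_eq by (simp add: algebra_simps)
  moreover have "(norm (z - z'))\<^sup>2 = (norm (x - x'))\<^sup>2 + (norm (y - y'))\<^sup>2"
    unfolding z z' by (simp add: norm_sq_prod)
  moreover have "inner (fst (g (x, y))) (x' - x) = - inner (fst (g (x, y))) (x - x')"
    "inner (- snd (g (x, y))) (y' - y) = inner (snd (g (x, y))) (y - y')"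
    by (simp_all add: inner_diff_right)
  moreover have "inner (fst (g (x, y)) - fst (g (x', y'))) (x - x') = inner (fst (g (x, y))) (x - x') - inner (fst (g (x', y'))) (x - x')"
    "inner (snd (g (x, y)) - snd (g (x', y'))) (y - y') = inner (snd (g (x, y))) (y - y') - inner (snd (g (x', y'))) (y - y')"
    by (simp_all add: inner_diff_left)
  moreover have "inner (- snd (g (x', y'))) (y - y') = - inner (snd (g (x', y'))) (y - y')" by simp
  ultimately show ?thesis using 1 2 3 4 n by (simp add: algebra_simps)
qed

lemma DF_pos: "\<mu> * (norm h)\<^sup>2 \<le> inner h (DF w h)"
proof -
  define p where "p t = inner h (F (w + t *\<^sub>R h))" for t
  have dp: "(p has_real_derivative inner h (DF w h)) (at 0)"
    unfolding p_def using line_deriv[OF F_deriv, where e=h and z=w and t=0 and h=h] by simp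
  show ?thesis
  proof (rule deriv_lower[OF dp])
    fix t :: real assume t: "0 < t" "t < 1"
    have "\<mu> * (norm (t *\<^sub>R h))\<^sup>2 \<le> inner (F (w + t *\<^sub>R h) - F w) (t *\<^sub>R h)"
      using F_mono[of "w + t *\<^sub>R h" w] by simp
    then have "t * (\<mu> * (norm h)\<^sup>2) * t \<le> (p t - p 0) * t"
      unfolding p_def using t by (simp add: inner_diff_left inner_commute power2_eq_square algebra_simps)
    then have "t * (\<mu> * (norm h)\<^sup>2) \<le> (p t - p 0)" by (rule mult_right_le_imp_le) (rule t(1))
    then show "\<mu> * (norm h)\<^sup>2 \<le> (p t - p 0) / t" using t by (simp add: le_divide_eq mult.commute)
  qed
qed

lemma Hx_pos: "\<mu> * (norm u)\<^sup>2 \<le> inner (u, 0) (H w (u, 0))"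
  using DF_pos[of "(u, 0)" w] by (simp add: DF_eq norm_Pair inner_prod_def)

lemma Hy_neg: "inner (0, v) (H w (0, v)) \<le> - \<mu> * (norm v)\<^sup>2"
  using DF_pos[of "(0, v)" w] by (simp add: DF_eq norm_Pair inner_prod_def)

lemma H_sym: "inner p (H w q) = inner q (H w p)"
  by (rule hess_sym[OF grad hess hess_cont])

lemma F_lip: "norm (F z - F z') \<le> L * norm (z - z')"
  by (rule differentiable_bound[of UNIV F DF L z z'])
     (auto intro: has_derivative_at_withinI F_deriv DF_bound)

lemma some_unit: obtains e :: "'a \<times> 'b" where "norm e = 1"
  using norm_Basis[OF SOME_Basis] by blast

lemma L2_nonneg: "L2 \<ge> 0"
proof -
  obtain e :: "'a \<times> 'b" where e: "norm e = 1" by (rule some_unit)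
  have "bounded_linear (\<lambda>h. DF e h - DF 0 h)" by (intro bounded_linear_sub DF_bl)
  then have "0 \<le> onorm (\<lambda>h. DF e h - DF 0 h)" by (rule onorm_pos_le)
  also have "\<dots> \<le> L2 * norm (e - 0)" by (rule DF_lip)
  finally show ?thesis using e by simp
qed

lemma mu_le_L: "\<mu> \<le> L"
proof -
  obtain e :: "'a \<times> 'b" where e: "norm e = 1" by (rule some_unit)
  have "\<mu> * (norm e)\<^sup>2 \<le> inner e (DF 0 e)" by (rule DF_pos)
  also have "\<dots> \<le> norm e * norm (DF 0 e)" by (rule norm_cauchy_schwarz)
  also have "norm (DF 0 e) \<le> onorm (DF 0) * norm e" by (rule onorm[OF DF_bl])
  also have "onorm (DF 0) \<le> L" by (rule DF_bound)
  finally show ?thesis using e by simp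
qed

lemma F_taylor: "norm (F (z + h) - F z - DF z h) \<le> L2 / 2 * (norm h)\<^sup>2"
  by (rule taylor_bound[OF F_deriv DF_lip L2_nonneg])

end

context crn begin

definition wv :: "'a \<times> 'b \<Rightarrow> 'a \<times> 'b" where
  "wv d = (norm (fst d) *\<^sub>R fst d, norm (snd d) *\<^sub>R snd d)"

definition Gm :: "'a \<times> 'b \<Rightarrow> real \<Rightarrow> 'a \<times> 'b \<Rightarrow> 'a \<times> 'b" where
  "Gm zk \<gamma> d = F zk + DF zk d + \<gamma> *\<^sub>R wv d"

lemma model_eq: "crn_model f g H zk \<gamma> (zk + e) =
   f zk + inner (g zk) e + 1/2 * inner e (H zk e) + \<gamma>/3 * norm (fst e) ^ 3 - \<gamma>/3 * norm (snd e) ^ 3"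
  unfolding crn_model_def by simp

lemma inner_wv: "inner (wv d) d = norm (fst d) ^ 3 + norm (snd d) ^ 3"
  unfolding wv_def by (simp add: inner_prod_def power2_norm_eq_inner[symmetric] power3_eq_cube power2_eq_square)

lemma norm_wv_sq: "(norm (wv d))\<^sup>2 = norm (fst d) ^ 4 + norm (snd d) ^ 4"
  unfolding wv_def by (simp add: norm_sq_prod power_mult_distrib flip: power_add)

lemma Gm_fst: "fst (Gm zk \<gamma> d) = fst (g zk) + fst (H zk d) + (\<gamma> * norm (fst d)) *\<^sub>R fst d"
  unfolding Gm_def wv_def by (simp add: F_eq DF_eq)

lemma Gm_snd: "snd (Gm zk \<gamma> d) = - snd (g zk) - snd (H zk d) + (\<gamma> * norm (snd d)) *\<^sub>R snd d"
  unfolding Gm_def wv_def by (simp add: F_eq DF_eq)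

lemma Gm_inner: "inner (Gm zk \<gamma> d) d \<ge> - norm (F zk) * norm d + \<mu> * (norm d)\<^sup>2 + \<gamma> * (norm (fst d) ^ 3 + norm (snd d) ^ 3)"
proof -
  have "inner (Gm zk \<gamma> d) d = inner (F zk) d + inner (DF zk d) d + \<gamma> * inner (wv d) d"
    unfolding Gm_def by (simp add: inner_add_left)
  moreover have "\<mu> * (norm d)\<^sup>2 \<le> inner (DF zk d) d" using DF_pos[of d zk] by (simp add: inner_commute)
  moreover have "- norm (F zk) * norm d \<le> inner (F zk) d"
    using norm_cauchy_schwarz[of "- F zk" d] by simp
  ultimately show ?thesis by (simp add: inner_wv)
qed

lemma Gm_zero_bound:
  assumes "Gm zk \<gamma> d = 0"
  shows "\<mu> * (norm d)\<^sup>2 + \<gamma> * (norm (fst d) ^ 3 + norm (snd d) ^ 3) \<le> norm (F zk) * norm d"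
  using Gm_inner[where zk=zk and \<gamma>=\<gamma> and d=d] assms by simp

lemma Gm_zero_norm:
  assumes "Gm zk \<gamma> d = 0" "\<gamma> \<ge> 0"
  shows "\<mu> * norm d \<le> norm (F zk)"
proof -
  have "\<gamma> * (norm (fst d) ^ 3 + norm (snd d) ^ 3) \<ge> 0" using assms(2) by simp
  then have "\<mu> * norm d * norm d \<le> norm (F zk) * norm d"
    using Gm_zero_bound[OF assms(1)] by (simp add: power2_eq_square mult.assoc)
  show ?thesis
  proof (cases "norm d = 0")
    case True then show ?thesis by simp
  next
    case False then have "norm d > 0" by simp
    then show ?thesis using \<open>\<mu> * norm d * norm d \<le> norm (F zk) * norm d\<close>
      by (rule mult_right_le_imp_le[rotated])
  qed
qed

lemma Gm_cont: "continuous_on S (Gm zk \<gamma>)"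
proof -
  have "continuous_on S (DF zk)"
    using DF_bl linear_continuous_on by blast
  then show ?thesis unfolding Gm_def wv_def
    by (intro continuous_intros) auto
qed

lemma Gm_exists:
  assumes "\<gamma> \<ge> 0"
  shows "\<exists>d. Gm zk \<gamma> d = 0"
proof (rule zero_exists)
  define R where "R = norm (F zk) / \<mu> + 1"
  show "continuous_on (cball 0 R) (Gm zk \<gamma>)" by (rule Gm_cont)
  show "R > 0" unfolding R_def using mu_pos by (simp add: add_nonneg_pos)
  fix p :: "'a \<times> 'b" assume p: "norm (p - 0) = R"
  have "\<mu> * R \<ge> norm (F zk)" unfolding R_def using mu_pos by (simp add: algebra_simps)
  then have "\<mu> * R * R \<ge> norm (F zk) * R" using \<open>R > 0\<close> by (simp add: mult_right_mono)
  moreover have "\<gamma> * (norm (fst p) ^ 3 + norm (snd p) ^ 3) \<ge> 0" using assms by simp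
  ultimately show "inner (Gm zk \<gamma> p) (p - 0) \<ge> 0"
    using Gm_inner[where zk=zk and \<gamma>=\<gamma> and d=p] p by (simp add: power2_eq_square algebra_simps)
qed

end

context crn begin

lemma quad_expand:
  "inner (d + e) (H zk (d + e)) = inner d (H zk d) + 2 * inner e (H zk d) + inner e (H zk e)"
proof -
  have "inner d (H zk e) = inner e (H zk d)" by (rule H_sym)
  then show ?thesis by (simp add: blinfun.add_right inner_add_left inner_add_right)
qed

lemma model_x:
  assumes G: "Gm zk \<gamma> d = 0" and gam: "\<gamma> \<ge> 0"
  shows "crn_model f g H zk \<gamma> (zk + d) + \<mu> / 2 * (norm a)\<^sup>2 \<le> crn_model f g H zk \<gamma> (zk + (d + (a, 0)))"
proof -
  define u where "u = fst d"
  have k1: "inner (d + (a, 0)) (H zk (d + (a, 0))) = inner d (H zk d) + 2 * inner (a, 0) (H zk d) + inner (a, 0) (H zk (a, 0))"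
    by (rule quad_expand)
  have f0: "fst (g zk) + fst (H zk d) + (\<gamma> * norm u) *\<^sub>R u = 0"
    using G Gm_fst[of zk \<gamma> d] unfolding u_def by simp
  have k2: "inner (g zk) (a, 0) + inner (a, 0) (H zk d) = - (\<gamma> * norm u * inner u a)"
  proof -
    have "inner (fst (g zk) + fst (H zk d) + (\<gamma> * norm u) *\<^sub>R u) a = 0" using f0 by simp
    then show ?thesis by (simp add: inner_prod_def inner_add_left inner_commute[of a])
  qed
  have k3: "norm u * inner u a \<le> (norm (u + a) ^ 3 - norm u ^ 3) / 3"
    using cubic_ineq[of u "u + a"] by simp
  have k3': "\<gamma> * (norm u * inner u a) \<le> \<gamma> * ((norm (u + a) ^ 3 - norm u ^ 3) / 3)"
    using k3 gam by (rule mult_left_mono)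
  have k4: "\<mu> * (norm a)\<^sup>2 \<le> inner (a, 0) (H zk (a, 0))" by (rule Hx_pos)
  show ?thesis
    unfolding model_eq using k1 k2 k3' k4
    by (simp add: u_def inner_add_right algebra_simps)
qed

lemma model_y:
  assumes G: "Gm zk \<gamma> d = 0" and gam: "\<gamma> \<ge> 0"
  shows "crn_model f g H zk \<gamma> (zk + (d + (0, b))) + \<mu> / 2 * (norm b)\<^sup>2 \<le> crn_model f g H zk \<gamma> (zk + d)"
proof -
  define v where "v = snd d"
  have k1: "inner (d + (0, b)) (H zk (d + (0, b))) = inner d (H zk d) + 2 * inner (0, b) (H zk d) + inner (0, b) (H zk (0, b))"
    by (rule quad_expand)
  have f0: "- snd (g zk) - snd (H zk d) + (\<gamma> * norm v) *\<^sub>R v = 0"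
    using G Gm_snd[of zk \<gamma> d] unfolding v_def by simp
  have k2: "inner (g zk) (0, b) + inner (0, b) (H zk d) = \<gamma> * norm v * inner v b"
  proof -
    have "inner (- snd (g zk) - snd (H zk d) + (\<gamma> * norm v) *\<^sub>R v) b = 0" using f0 by simp
    then show ?thesis by (simp add: inner_prod_def inner_add_left inner_diff_left inner_commute[of b])
  qed
  have k3: "norm v * inner v b \<le> (norm (v + b) ^ 3 - norm v ^ 3) / 3"
    using cubic_ineq[of v "v + b"] by simp
  have k3': "\<gamma> * (norm v * inner v b) \<le> \<gamma> * ((norm (v + b) ^ 3 - norm v ^ 3) / 3)"
    using k3 gam by (rule mult_left_mono)
  have k4: "inner (0, b) (H zk (0, b)) \<le> - \<mu> * (norm b)\<^sup>2" by (rule Hy_neg)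
  show ?thesis
    unfolding model_eq using k1 k2 k3' k4
    by (simp add: v_def inner_add_right algebra_simps)
qed

lemma saddle_of_zero:
  assumes G: "Gm zk \<gamma> d = 0" and gam: "\<gamma> \<ge> 0"
  shows "is_saddle (crn_model f g H zk \<gamma>) (zk + d)"
  unfolding is_saddle_def
proof (intro allI conjI)
  fix x y
  have e1: "(fst (zk + d), y) = zk + (d + (0, y - snd zk - snd d))" by (simp add: prod_eq_iff)
  have e2: "(x, snd (zk + d)) = zk + (d + (x - fst zk - fst d, 0))" by (simp add: prod_eq_iff)
  show "crn_model f g H zk \<gamma> (fst (zk + d), y) \<le> crn_model f g H zk \<gamma> (zk + d)"
    unfolding e1 using model_y[OF G gam, of "y - snd zk - snd d"] mu_pos
    by (smt (verit) divide_nonneg_pos mult_nonneg_nonneg zero_le_power2 zero_less_two)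
  show "crn_model f g H zk \<gamma> (zk + d) \<le> crn_model f g H zk \<gamma> (x, snd (zk + d))"
    unfolding e2 using model_x[OF G gam, of "x - fst zk - fst d"] mu_pos
    by (smt (verit) divide_nonneg_pos mult_nonneg_nonneg zero_le_power2 zero_less_two)
qed

lemma saddle_unique:
  assumes G: "Gm zk \<gamma> d = 0" and gam: "\<gamma> \<ge> 0"
    and S: "is_saddle (crn_model f g H zk \<gamma>) (zk + d')"
  shows "d' = d"
proof -
  let ?\<phi> = "crn_model f g H zk \<gamma>"
  define a where "a = fst d' - fst d"
  define b where "b = snd d' - snd d"
  have e1: "(fst (zk + d'), snd (zk + d)) = zk + (d + (a, 0))" unfolding a_def by (simp add: prod_eq_iff)
  have e2: "(fst (zk + d), snd (zk + d')) = zk + (d + (0, b))" unfolding b_def by (simp add: prod_eq_iff)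
  have s1: "?\<phi> (fst (zk + d'), snd (zk + d)) \<le> ?\<phi> (zk + d')" using S unfolding is_saddle_def by blast
  have s2: "?\<phi> (zk + d') \<le> ?\<phi> (fst (zk + d), snd (zk + d'))" using S unfolding is_saddle_def by blast
  have m1: "?\<phi> (zk + d) + \<mu> / 2 * (norm a)\<^sup>2 \<le> ?\<phi> (zk + (d + (a, 0)))" by (rule model_x[OF G gam])
  have m2: "?\<phi> (zk + (d + (0, b))) + \<mu> / 2 * (norm b)\<^sup>2 \<le> ?\<phi> (zk + d)" by (rule model_y[OF G gam])
  have "\<mu> / 2 * (norm a)\<^sup>2 + \<mu> / 2 * (norm b)\<^sup>2 \<le> 0"
    using s1 s2 m1 m2 unfolding e1 e2 by linarith
  moreover have "\<mu> / 2 * (norm a)\<^sup>2 \<ge> 0" "\<mu> / 2 * (norm b)\<^sup>2 \<ge> 0" using mu_pos by simp_all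
  ultimately have "\<mu> / 2 * (norm a)\<^sup>2 = 0" "\<mu> / 2 * (norm b)\<^sup>2 = 0" by linarith+
  then have "a = 0" "b = 0" using mu_pos by simp_all
  then show ?thesis unfolding a_def b_def by (simp add: prod_eq_iff)
qed

lemma disp_char:
  assumes G: "Gm zk \<gamma> d = 0" and gam: "\<gamma> \<ge> 0"
  shows "crn_disp f g H zk \<gamma> = d"
  unfolding crn_disp_def
  using saddle_of_zero[OF G gam] saddle_unique[OF G gam] by (rule the_equality)

lemma disp_zero:
  assumes gam: "\<gamma> \<ge> 0"
  shows "Gm zk \<gamma> (crn_disp f g H zk \<gamma>) = 0"
proof -
  obtain d where "Gm zk \<gamma> d = 0" using Gm_exists[OF gam] by blast
  with disp_char[OF this gam] show ?thesis by simp
qed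

end

lemma nfst: "norm (fst d) \<le> norm d"
  using norm_fst_le[of "fst d" "snd d"] by simp
lemma nsnd: "norm (snd d) \<le> norm d"
  using norm_snd_le[of "snd d" "fst d"] by simp

lemma key_poly:
  fixes \<phi> X s \<mu> :: real
  assumes "X\<^sup>2 \<le> \<mu> * (\<phi> * s - \<mu> * s\<^sup>2)"
  shows "12 * \<phi> * X + 3 * \<mu>\<^sup>2 * s\<^sup>2 \<le> 8 * \<phi>\<^sup>2"
proof -
  have a: "0 \<le> 3 * (\<phi> - 2 * X)\<^sup>2" by simp
  have b: "0 \<le> 5 * (\<phi> - 6/5 * \<mu> * s)\<^sup>2 + 9/5 * \<mu>\<^sup>2 * s\<^sup>2" by simp
  show ?thesis using a b assms by (simp add: power2_eq_square algebra_simps)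
qed

lemma quartic:
  fixes a b :: real
  assumes "a \<ge> 0" "b \<ge> 0"
  shows "a ^ 4 + b ^ 4 \<le> (a + b) * (a ^ 3 + b ^ 3)"
proof -
  have "0 \<le> a * b ^ 3 + a ^ 3 * b" using assms by simp
  then show ?thesis by (simp add: algebra_simps power_numeral_reduce)
qed

context crn begin

lemma gamma_props:
  assumes gbar: "\<gamma>bar > 0" and rho: "0 < \<rho>" "\<rho> < 1"
  shows "crn_gamma f g H \<mu> \<gamma>bar \<rho> zk > 0"
    "Gm zk (crn_gamma f g H \<mu> \<gamma>bar \<rho> zk) (crn_disp f g H zk (crn_gamma f g H \<mu> \<gamma>bar \<rho> zk)) = 0"
    "crn_gamma f g H \<mu> \<gamma>bar \<rho> zk * (norm (fst (crn_disp f g H zk (crn_gamma f g H \<mu> \<gamma>bar \<rho> zk)))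
        + norm (snd (crn_disp f g H zk (crn_gamma f g H \<mu> \<gamma>bar \<rho> zk)))) \<le> \<mu>"
proof -
  define P where "P j \<longleftrightarrow> \<gamma>bar * \<rho> ^ j *
        (norm (fst (crn_disp f g H zk (\<gamma>bar * \<rho> ^ j))) + norm (snd (crn_disp f g H zk (\<gamma>bar * \<rho> ^ j)))) \<le> \<mu>" for j
  define K where "K = 2 * norm (F zk) / \<mu> + 1"
  have Kp: "K > 0" unfolding K_def using mu_pos by (simp add: add_nonneg_pos)
  obtain n where n: "\<rho> ^ n < \<mu> / (\<gamma>bar * K)"
    using real_arch_pow_inv[of "\<mu> / (\<gamma>bar * K)" \<rho>] mu_pos gbar Kp rho by auto
  have "P n"
  proof -
    define d where "d = crn_disp f g H zk (\<gamma>bar * \<rho> ^ n)"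
    have gn: "\<gamma>bar * \<rho> ^ n \<ge> 0" using gbar rho by simp
    have "Gm zk (\<gamma>bar * \<rho> ^ n) d = 0" unfolding d_def by (rule disp_zero[OF gn])
    then have "\<mu> * norm d \<le> norm (F zk)" using gn by (rule Gm_zero_norm)
    then have "norm d \<le> norm (F zk) / \<mu>" using mu_pos by (simp add: le_divide_eq mult.commute)
    then have "norm (fst d) + norm (snd d) \<le> K"
      using nfst[of d] nsnd[of d] unfolding K_def by simp
    then have "\<gamma>bar * \<rho> ^ n * (norm (fst d) + norm (snd d)) \<le> \<gamma>bar * \<rho> ^ n * K"
      using gn by (rule mult_left_mono)
    also have "\<gamma>bar * \<rho> ^ n * K < \<mu>"
    proof -
      have "\<rho> ^ n * (\<gamma>bar * K) < \<mu>" using n gbar Kp by (simp add: less_divide_eq)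
      then show ?thesis by (simp add: mult_ac)
    qed
    finally show ?thesis unfolding P_def d_def by simp
  qed
  then have PL: "P (LEAST j. P j)" by (rule LeastI)
  have eq: "crn_gamma f g H \<mu> \<gamma>bar \<rho> zk = \<gamma>bar * \<rho> ^ (LEAST j. P j)"
    unfolding crn_gamma_def P_def by simp
  show g0: "crn_gamma f g H \<mu> \<gamma>bar \<rho> zk > 0" unfolding eq using gbar rho by simp
  show "Gm zk (crn_gamma f g H \<mu> \<gamma>bar \<rho> zk) (crn_disp f g H zk (crn_gamma f g H \<mu> \<gamma>bar \<rho> zk)) = 0"
    using g0 by (intro disp_zero) simp
  show "crn_gamma f g H \<mu> \<gamma>bar \<rho> zk * (norm (fst (crn_disp f g H zk (crn_gamma f g H \<mu> \<gamma>bar \<rho> zk)))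
        + norm (snd (crn_disp f g H zk (crn_gamma f g H \<mu> \<gamma>bar \<rho> zk)))) \<le> \<mu>"
    using PL unfolding eq P_def .
qed

end

context crn begin

lemma step_bound:
  assumes gam: "\<gamma> \<ge> 0" and G: "Gm zk \<gamma> d = 0"
    and gb: "\<gamma> * (norm (fst d) + norm (snd d)) \<le> \<mu>"
    and Lm: "Lm > 0" and LF: "L2 * norm (F zk) \<le> Lm"
    and al: "\<alpha> = \<mu>\<^sup>2 / (2 * Lm)" and al1: "\<alpha> \<le> 1"
  shows "norm (F (zk + \<alpha> *\<^sub>R d)) \<le> (1 - \<alpha> / 3) * norm (F zk)"
proof -
  define \<phi> where "\<phi> = norm (F zk)"
  define s where "s = norm d"
  define a where "a = norm (fst d)"
  define b where "b = norm (snd d)"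
  define X where "X = \<gamma> * norm (wv d)"
  define R where "R = F (zk + \<alpha> *\<^sub>R d) - F zk - DF zk (\<alpha> *\<^sub>R d)"
  have alpos: "\<alpha> > 0" unfolding al using mu_pos Lm by simp
  have a0: "a \<ge> 0" "b \<ge> 0" "s \<ge> 0" "\<phi> \<ge> 0" unfolding a_def b_def s_def \<phi>_def by simp_all
  have Rb: "norm R \<le> L2 / 2 * (norm (\<alpha> *\<^sub>R d))\<^sup>2" unfolding R_def by (rule F_taylor)
  have Rb2: "norm R \<le> L2 / 2 * \<alpha>\<^sup>2 * s\<^sup>2"
    using Rb alpos unfolding s_def by (simp add: power_mult_distrib)
  have lin: "DF zk (\<alpha> *\<^sub>R d) = \<alpha> *\<^sub>R DF zk d"
    using bounded_linear.linear[OF DF_bl[of zk]] by (simp add: linear_scale)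
  have Gd: "DF zk d = - F zk - \<gamma> *\<^sub>R wv d"
    using G unfolding Gm_def by (simp add: algebra_simps eq_neg_iff_add_eq_0)
  have Fnew: "F (zk + \<alpha> *\<^sub>R d) = (1 - \<alpha>) *\<^sub>R F zk - (\<alpha> * \<gamma>) *\<^sub>R wv d + R"
  proof -
    have gen: "\<And>A B W :: 'a \<times> 'b. A = (1 - \<alpha>) *\<^sub>R B - (\<alpha> * \<gamma>) *\<^sub>R W + (A - B - \<alpha> *\<^sub>R (- B - \<gamma> *\<^sub>R W))"
      by (simp add: algebra_simps)
    show ?thesis unfolding R_def lin Gd by (rule gen)
  qed
  have tri: "norm (F (zk + \<alpha> *\<^sub>R d)) \<le> (1 - \<alpha>) * \<phi> + \<alpha> * X + norm R"
  proof -
    have "norm (F (zk + \<alpha> *\<^sub>R d)) \<le> norm ((1 - \<alpha>) *\<^sub>R F zk) + norm ((\<alpha> * \<gamma>) *\<^sub>R wv d) + norm R"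
      unfolding Fnew
      using norm_triangle_ineq[of "(1 - \<alpha>) *\<^sub>R F zk - (\<alpha> * \<gamma>) *\<^sub>R wv d" R]
        norm_triangle_ineq4[of "(1 - \<alpha>) *\<^sub>R F zk" "(\<alpha> * \<gamma>) *\<^sub>R wv d"] by linarith
    also have "\<dots> = (1 - \<alpha>) * \<phi> + \<alpha> * X + norm R"
      using al1 alpos gam unfolding \<phi>_def X_def by simp
    finally show ?thesis .
  qed
  have bnd: "\<mu> * s\<^sup>2 + \<gamma> * (a ^ 3 + b ^ 3) \<le> \<phi> * s"
    using Gm_zero_bound[OF G] unfolding a_def b_def s_def \<phi>_def .
  show ?thesis
  proof (cases "\<phi> = 0")
    case True
    then have "\<mu> * s \<le> 0" using Gm_zero_norm[OF G gam] unfolding s_def \<phi>_def by simp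
    then have "s = 0" using mu_pos a0 by (simp add: mult_le_0_iff)
    then have "d = 0" unfolding s_def by simp
    then show ?thesis using True unfolding \<phi>_def by simp
  next
    case False
    then have phip: "\<phi> > 0" using a0 by simp
    have X2: "X\<^sup>2 \<le> \<mu> * (\<phi> * s - \<mu> * s\<^sup>2)"
    proof -
      have "X\<^sup>2 = \<gamma>\<^sup>2 * (a ^ 4 + b ^ 4)"
        unfolding X_def a_def b_def by (simp add: power_mult_distrib norm_wv_sq)
      also have "\<dots> \<le> \<gamma>\<^sup>2 * ((a + b) * (a ^ 3 + b ^ 3))"
        using quartic[OF a0(1,2)] by (simp add: mult_left_mono)
      also have "\<dots> = (\<gamma> * (a + b)) * (\<gamma> * (a ^ 3 + b ^ 3))" by (simp add: power2_eq_square)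
      also have "\<dots> \<le> \<mu> * (\<gamma> * (a ^ 3 + b ^ 3))"
        using gb gam a0 unfolding a_def b_def by (intro mult_right_mono) simp_all
      also have "\<dots> \<le> \<mu> * (\<phi> * s - \<mu> * s\<^sup>2)"
        using bnd mu_pos by (intro mult_left_mono) simp_all
      finally show ?thesis .
    qed
    have kp: "12 * \<phi> * X + 3 * \<mu>\<^sup>2 * s\<^sup>2 \<le> 8 * \<phi>\<^sup>2" by (rule key_poly[OF X2])
    have Rphi: "norm R * \<phi> \<le> \<alpha> * \<mu>\<^sup>2 * s\<^sup>2 / 4"
    proof -
      have "norm R * \<phi> \<le> L2 / 2 * \<alpha>\<^sup>2 * s\<^sup>2 * \<phi>" using Rb2 phip by (simp add: mult_right_mono)
      also have "\<dots> = (\<alpha> * s\<^sup>2 / 2) * \<alpha> * (L2 * \<phi>)" by (simp add: power2_eq_square algebra_simps)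
      also have "\<dots> \<le> (\<alpha> * s\<^sup>2 / 2) * \<alpha> * Lm"
        using LF alpos unfolding \<phi>_def by (intro mult_left_mono) simp_all
      also have "\<dots> = \<alpha> * \<mu>\<^sup>2 * s\<^sup>2 / 4" unfolding al using Lm by (simp add: power2_eq_square field_simps)
      finally show ?thesis .
    qed
    have "(\<alpha> * X + norm R) * \<phi> \<le> (2 / 3 * \<alpha> * \<phi>) * \<phi>"
    proof -
      have "(\<alpha> * X + norm R) * \<phi> \<le> \<alpha> * (X * \<phi>) + \<alpha> * \<mu>\<^sup>2 * s\<^sup>2 / 4"
        using Rphi by (simp add: algebra_simps)
      also have "\<dots> = \<alpha> * (12 * \<phi> * X + 3 * \<mu>\<^sup>2 * s\<^sup>2) / 12" by (simp add: algebra_simps)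
      also have "\<dots> \<le> \<alpha> * (8 * \<phi>\<^sup>2) / 12" using kp alpos by (simp add: divide_right_mono mult_left_mono)
      also have "\<dots> = (2 / 3 * \<alpha> * \<phi>) * \<phi>" by (simp add: power2_eq_square)
      finally show ?thesis .
    qed
    then have "\<alpha> * X + norm R \<le> 2 / 3 * \<alpha> * \<phi>" using phip by simp
    then show ?thesis using tri unfolding \<phi>_def by (simp add: algebra_simps)
  qed
qed

end

context crn begin

lemma merit_F: "merit g w = 1/2 * (norm (F w))\<^sup>2"
  unfolding merit_def by simp

lemma merit_le_iff: "merit g w \<le> merit g z \<longleftrightarrow> norm (F w) \<le> norm (F z)"
proof
  assume "merit g w \<le> merit g z"
  then have "(norm (F w))\<^sup>2 \<le> (norm (F z))\<^sup>2" unfolding merit_F by simp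
  then show "norm (F w) \<le> norm (F z)" by (rule power2_le_imp_le) simp
next
  assume "norm (F w) \<le> norm (F z)"
  then have "(norm (F w))\<^sup>2 \<le> (norm (F z))\<^sup>2" by (rule power_mono) simp
  then show "merit g w \<le> merit g z" unfolding merit_F by simp
qed

lemma zstar_exists: "\<exists>zs. F zs = 0"
proof (rule zero_exists)
  define R where "R = norm (F 0) / \<mu> + 1"
  show "continuous_on (cball 0 R) F" by (rule F_cont)
  show "R > 0" unfolding R_def using mu_pos by (simp add: add_nonneg_pos)
  fix p :: "'a \<times> 'b" assume p: "norm (p - 0) = R"
  have "\<mu> * R \<ge> norm (F 0)" unfolding R_def using mu_pos by (simp add: algebra_simps)
  then have "\<mu> * R * R \<ge> norm (F 0) * R" using \<open>R > 0\<close> by (simp add: mult_right_mono)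
  moreover have "\<mu> * (norm (p - 0))\<^sup>2 \<le> inner (F p - F 0) (p - 0)" by (rule F_mono)
  moreover have "- norm (F 0) * norm p \<le> inner (F 0) p"
    using norm_cauchy_schwarz[of "- F 0" p] by simp
  ultimately show "inner (F p) (p - 0) \<ge> 0"
    using p by (simp add: power2_eq_square inner_diff_left algebra_simps)
qed

lemma level_facts:
  fixes z0 :: "'a \<times> 'b"
  defines "D \<equiv> Sup {norm (w - z0) | w. merit g w \<le> merit g z0}"
  shows "D \<ge> 0" "norm (F z0) \<le> L * D"
proof -
  obtain zs where zs: "F zs = 0" using zstar_exists by blast
  let ?S = "{norm (w - z0) | w. merit g w \<le> merit g z0}"
  have bdd: "bdd_above ?S"
  proof (rule bdd_aboveI)
    fix r assume "r \<in> ?S"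
    then obtain w where w: "r = norm (w - z0)" "merit g w \<le> merit g z0" by blast
    have Fw: "norm (F w) \<le> norm (F z0)" using w(2) merit_le_iff by blast
    have "\<mu> * (norm (w - zs))\<^sup>2 \<le> inner (F w - F zs) (w - zs)" by (rule F_mono)
    also have "\<dots> \<le> norm (F w) * norm (w - zs)" using zs by (simp add: norm_cauchy_schwarz)
    finally have "\<mu> * norm (w - zs) * norm (w - zs) \<le> norm (F w) * norm (w - zs)"
      by (simp add: power2_eq_square mult.assoc)
    then have "\<mu> * norm (w - zs) \<le> norm (F w)"
      by (cases "norm (w - zs) = 0") (auto intro: mult_right_le_imp_le)
    then have "norm (w - zs) \<le> norm (F z0) / \<mu>"
      using Fw mu_pos by (simp add: le_divide_eq mult.commute)
    moreover have "norm (w - z0) \<le> norm (w - zs) + norm (zs - z0)"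
      using norm_triangle_ineq[of "w - zs" "zs - z0"] by simp
    ultimately show "r \<le> norm (F z0) / \<mu> + norm (zs - z0)" using w(1) by linarith
  qed
  have "0 \<in> ?S" by force
  then show "D \<ge> 0" unfolding D_def using bdd by (rule cSup_upper)
  have "merit g zs \<le> merit g z0" using zs merit_le_iff by simp
  then have "norm (zs - z0) \<in> ?S" by blast
  then have zD: "norm (zs - z0) \<le> D" unfolding D_def using bdd by (rule cSup_upper)
  have "norm (F z0) = norm (F z0 - F zs)" using zs by simp
  also have "\<dots> \<le> L * norm (z0 - zs)" by (rule F_lip)
  also have "\<dots> \<le> L * D" using zD mu_le_L mu_pos by (simp add: norm_minus_commute mult_left_mono)
  finally show "norm (F z0) \<le> L * D" .
qed

end

theorem theorem3p5:
  fixes f :: "(real^'n) \<times> (real^'m) \<Rightarrow> real"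
    and g :: "(real^'n) \<times> (real^'m) \<Rightarrow> (real^'n) \<times> (real^'m)"
    and H :: "(real^'n) \<times> (real^'m) \<Rightarrow> ((real^'n) \<times> (real^'m)) \<Rightarrow>\<^sub>L ((real^'n) \<times> (real^'m))"
    and z :: "nat \<Rightarrow> (real^'n) \<times> (real^'m)"
    and \<mu> L L2 \<gamma>bar \<rho> :: real
  assumes grad: "\<And>w. (f has_derivative (\<lambda>h. inner (g w) h)) (at w)"
    and hess: "\<And>w. (g has_derivative blinfun_apply (H w)) (at w)"
    and hess_cont: "continuous_on UNIV H"
    and mu_pos: "\<mu> > 0"
    and sconvex: "\<And>y. strongly_convex_on UNIV \<mu> (\<lambda>x. f (x, y))"
    and sconcave: "\<And>x. strongly_convex_on UNIV \<mu> (\<lambda>y. - f (x, y))"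
    and DF_bound: "\<And>w. onorm (DFop H w) \<le> L"
    and DF_lip: "\<And>w w'. onorm (\<lambda>h. DFop H w h - DFop H w' h) \<le> L2 * norm (w - w')"
    and gbar: "\<gamma>bar > 0"
    and rho: "0 < \<rho>" "\<rho> < 1"
    and seq: "\<And>k. z (Suc k) =
       crn_step f g H \<mu> \<gamma>bar \<rho>
         (\<mu>\<^sup>2 / (2 * (L\<^sup>2 + L * L2 * Sup {norm (w - z 0) | w. merit g w \<le> merit g (z 0)})))
         (z k)"
  shows "(\<forall>k. merit g (z (Suc k)) \<le>
            (1 - \<mu>\<^sup>2 / (6 * (L\<^sup>2 + L * L2 * Sup {norm (w - z 0) | w. merit g w \<le> merit g (z 0)})))\<^sup>2
              * merit g (z k))
       \<and> (\<forall>\<epsilon>>0. \<forall>k. real k \<ge> 3 * (L\<^sup>2 + L * L2 * Sup {norm (w - z 0) | w. merit g w \<le> merit g (z 0)}) / \<mu>\<^sup>2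
                                 * ln (merit g (z 0) / \<epsilon>)
            \<longrightarrow> merit g (z k) \<le> \<epsilon>)"
proof -
  interpret C: crn f g H \<mu> L L2
    unfolding crn_def using grad hess hess_cont mu_pos sconvex sconcave DF_bound DF_lip by blast
  define D where "D = Sup {norm (w - z 0) | w. merit g w \<le> merit g (z 0)}"
  define Lm where "Lm = L\<^sup>2 + L * L2 * D"
  define \<alpha> where "\<alpha> = \<mu>\<^sup>2 / (2 * Lm)"
  define q where "q = \<alpha> / 3"
  have D0: "D \<ge> 0" unfolding D_def by (rule C.level_facts(1))
  have FD: "norm (Fop g (z 0)) \<le> L * D" unfolding D_def by (rule C.level_facts(2))
  have muL: "\<mu> \<le> L" by (rule C.mu_le_L)
  have L20: "L2 \<ge> 0" by (rule C.L2_nonneg)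
  have LL: "\<mu>\<^sup>2 \<le> L\<^sup>2" using muL mu_pos by (intro power_mono) simp_all
  have LLD: "L * L2 * D \<ge> 0" using muL mu_pos L20 D0 by simp
  have Lm_ge: "\<mu>\<^sup>2 \<le> Lm" unfolding Lm_def using LL LLD by linarith
  have Lm_pos: "Lm > 0" using Lm_ge mu_pos by (smt (verit) zero_less_power2)
  have al_pos: "\<alpha> > 0" unfolding \<alpha>_def using Lm_pos mu_pos by simp
  have al_le: "\<alpha> \<le> 1"
  proof -
    have "\<mu>\<^sup>2 \<le> 2 * Lm" using Lm_ge Lm_pos by linarith
    then show ?thesis unfolding \<alpha>_def using Lm_pos by (simp add: divide_le_eq)
  qed
  have q01: "0 \<le> 1 - q" "1 - q \<le> 1" unfolding q_def using al_pos al_le by simp_all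
  have seq': "\<And>k. z (Suc k) = crn_step f g H \<mu> \<gamma>bar \<rho> \<alpha> (z k)"
    using seq unfolding \<alpha>_def Lm_def D_def .
  have step: "merit g (z (Suc k)) \<le> (1 - q)\<^sup>2 * merit g (z k)"
    if mk: "merit g (z k) \<le> merit g (z 0)" for k
  proof -
    have Fk: "norm (Fop g (z k)) \<le> norm (Fop g (z 0))" using mk C.merit_le_iff by blast
    have LF: "L2 * norm (Fop g (z k)) \<le> Lm"
    proof -
      have "L2 * norm (Fop g (z k)) \<le> L2 * (L * D)"
        using Fk FD L20 by (meson mult_left_mono order_trans)
      then show ?thesis unfolding Lm_def using LL mu_pos by (simp add: algebra_simps) (smt (verit) zero_le_power2)
    qed
    define \<gamma> where "\<gamma> = crn_gamma f g H \<mu> \<gamma>bar \<rho> (z k)"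
    define d where "d = crn_disp f g H (z k) \<gamma>"
    have gp: "\<gamma> > 0" "C.Gm (z k) \<gamma> d = 0" "\<gamma> * (norm (fst d) + norm (snd d)) \<le> \<mu>"
      using C.gamma_props[OF gbar rho, of "z k"] unfolding \<gamma>_def d_def by auto
    have sb: "norm (Fop g (z k + \<alpha> *\<^sub>R d)) \<le> (1 - \<alpha> / 3) * norm (Fop g (z k))"
      using gp(1) by (intro C.step_bound[OF _ gp(2) gp(3) Lm_pos LF \<alpha>_def al_le]) simp
    have ma: "merit g (z k + \<alpha> *\<^sub>R d) \<le> (1 - q)\<^sup>2 * merit g (z k)"
    proof -
      have "(norm (Fop g (z k + \<alpha> *\<^sub>R d)))\<^sup>2 \<le> ((1 - q) * norm (Fop g (z k)))\<^sup>2"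
        using sb unfolding q_def by (intro power_mono) simp_all
      then show ?thesis unfolding C.merit_F by (simp add: power_mult_distrib)
    qed
    have "merit g (z (Suc k)) \<le> merit g (z k + \<alpha> *\<^sub>R d)"
      unfolding seq' crn_step_def Let_def d_def \<gamma>_def by simp
    then show ?thesis using ma by linarith
  qed
  have mono: "merit g (z k) \<le> merit g (z 0)" for k
  proof (induction k)
    case 0 then show ?case by simp
  next
    case (Suc k)
    have "(1 - q)\<^sup>2 \<le> 1" using q01 by (simp add: power_le_one)
    moreover have "merit g (z k) \<ge> 0" unfolding merit_def by simp
    ultimately have "(1 - q)\<^sup>2 * merit g (z k) \<le> merit g (z k)"
      by (simp add: mult_left_le_one_le)
    then show ?case using step[OF Suc.IH] Suc.IH by linarith
  qed
  have part1: "\<forall>k. merit g (z (Suc k)) \<le> (1 - \<mu>\<^sup>2 / (6 * (L\<^sup>2 + L * L2 * Sup {norm (w - z 0) | w. merit g w \<le> merit g (z 0)})))\<^sup>2 * merit g (z k)"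
  proof
    fix k
    have "1 - q = 1 - \<mu>\<^sup>2 / (6 * (L\<^sup>2 + L * L2 * Sup {norm (w - z 0) | w. merit g w \<le> merit g (z 0)}))"
      unfolding q_def \<alpha>_def Lm_def D_def by simp
    then show "merit g (z (Suc k)) \<le> (1 - \<mu>\<^sup>2 / (6 * (L\<^sup>2 + L * L2 * Sup {norm (w - z 0) | w. merit g w \<le> merit g (z 0)})))\<^sup>2 * merit g (z k)"
      using step[OF mono[of k]] by simp
  qed
  have geo: "merit g (z k) \<le> ((1 - q)\<^sup>2) ^ k * merit g (z 0)" for k
  proof (induction k)
    case 0 then show ?case by simp
  next
    case (Suc k)
    have "merit g (z (Suc k)) \<le> (1 - q)\<^sup>2 * merit g (z k)" by (rule step[OF mono])
    also have "\<dots> \<le> (1 - q)\<^sup>2 * (((1 - q)\<^sup>2) ^ k * merit g (z 0))"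
      using Suc.IH by (simp add: mult_left_mono)
    finally show ?case by (simp add: mult.assoc)
  qed
  have part2: "\<forall>\<epsilon>>0. \<forall>k. real k \<ge> 3 * (L\<^sup>2 + L * L2 * Sup {norm (w - z 0) | w. merit g w \<le> merit g (z 0)}) / \<mu>\<^sup>2
                                 * ln (merit g (z 0) / \<epsilon>)
            \<longrightarrow> merit g (z k) \<le> \<epsilon>"
  proof (intro allI impI)
    fix \<epsilon> :: real and k :: nat
    assume ep: "\<epsilon> > 0"
    assume kb: "real k \<ge> 3 * (L\<^sup>2 + L * L2 * Sup {norm (w - z 0) | w. merit g w \<le> merit g (z 0)}) / \<mu>\<^sup>2
                                 * ln (merit g (z 0) / \<epsilon>)"
    then have kb': "real k \<ge> 3 * Lm / \<mu>\<^sup>2 * ln (merit g (z 0) / \<epsilon>)" unfolding Lm_def D_def .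
    show "merit g (z k) \<le> \<epsilon>"
    proof (cases "merit g (z 0) \<le> \<epsilon>")
      case True then show ?thesis using mono[of k] by linarith
    next
      case False
      then have m0: "merit g (z 0) > \<epsilon>" by simp
      then have m0p: "merit g (z 0) > 0" using ep by simp
      have lnp: "ln (merit g (z 0) / \<epsilon>) > 0" using m0 ep by simp
      have twoq: "2 * q = \<mu>\<^sup>2 / (3 * Lm)" unfolding q_def \<alpha>_def by simp
      have "2 * q * real k \<ge> 2 * q * (3 * Lm / \<mu>\<^sup>2 * ln (merit g (z 0) / \<epsilon>))"
        using kb' q01 al_pos unfolding q_def by (intro mult_left_mono) simp_all
      also have "2 * q * (3 * Lm / \<mu>\<^sup>2 * ln (merit g (z 0) / \<epsilon>)) = ln (merit g (z 0) / \<epsilon>)"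
        unfolding twoq using Lm_pos mu_pos by (simp add: field_simps)
      finally have kq: "ln (merit g (z 0) / \<epsilon>) \<le> 2 * q * real k" .
      have e1: "1 - q \<le> exp (- q)" using exp_ge_add_one_self[of "- q"] by simp
      have "(1 - q)\<^sup>2 \<le> (exp (- q))\<^sup>2" using e1 q01 by (intro power_mono) simp_all
      also have "(exp (- q))\<^sup>2 = exp (- 2 * q)" by (simp add: power2_eq_square flip: exp_add)
      finally have e2: "(1 - q)\<^sup>2 \<le> exp (- 2 * q)" .
      have "((1 - q)\<^sup>2) ^ k \<le> (exp (- 2 * q)) ^ k" using e2 by (intro power_mono) simp_all
      also have "\<dots> = exp (- (2 * q * real k))" by (simp add: exp_of_nat_mult[symmetric] algebra_simps)
      also have "\<dots> \<le> exp (- ln (merit g (z 0) / \<epsilon>))" using kq by simp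
      also have "\<dots> = \<epsilon> / merit g (z 0)" using m0p ep by (simp add: exp_minus inverse_divide)
      finally have pk: "((1 - q)\<^sup>2) ^ k \<le> \<epsilon> / merit g (z 0)" .
      have "merit g (z k) \<le> ((1 - q)\<^sup>2) ^ k * merit g (z 0)" by (rule geo)
      also have "\<dots> \<le> \<epsilon> / merit g (z 0) * merit g (z 0)"
        using mult_right_mono[OF pk, of "merit g (z 0)"] m0p by linarith
      also have "\<dots> = \<epsilon>" using m0p by simp
      finally show ?thesis .
    qed
  qed
  show ?thesis using part1 part2 by blast
qed

end
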